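(* Let $\mathcal H$ be an infinite-dimensional complex Hilbert space. Then the generalized effect algebra $(\mathcal V_f(\mathcal H);\oplus,o)$ is monotone Dedekind downwards $\sigma$-complete.
   Context: Bilinear forms $t$ on $\mathcal H$ are sesquilinear maps $D(t)\times D(t)\to\mathbb C$ on a dense linear subspace $D(t)$ (linear in the first argument); $t$ is positive if $t(x,x)\ge0$ on $D(t)$, bounded if $\sup\{t(x,x)\mid x\in D(t),\|x\|=1\}<\infty$. The sum $t+s$ has domain $D(t)\cap D(s)$. $o$ is the zero form on $\mathcal H$. $\mathcal V_f(\mathcal H)$ is the set of positive bilinear forms with dense domain such that $D(t)=\mathcal H$ whenever $t$ is bounded; $t\oplus s$ is defined iff $t$ or $s$ is bounded or $D(t)=D(s)$, and then $t\oplus s=t+s$; this is a generalized effect algebra with induced order $t\le s$ iff $t\oplus r=s$ for some $r\in\mathcal V_f(\mathcal H)$. A generalized effect algebra is monotone Dedekind downwards $\sigma$-complete if every sequence $x_1\ge x_2\ge\cdots$ (in the induced order) has an infimum in it. *)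

theory Defs
  imports "HOL-Analysis.Analysis"
begin

class complex_vector = real_vector +
  fixes scaleC :: "complex \<Rightarrow> 'a \<Rightarrow> 'a" (infixr "*\<^sub>C" 75)
  assumes scaleC_add_right: "a *\<^sub>C (x + y) = a *\<^sub>C x + a *\<^sub>C y"
    and scaleC_add_left: "(a + b) *\<^sub>C x = a *\<^sub>C x + b *\<^sub>C x"
    and scaleC_scaleC: "a *\<^sub>C (b *\<^sub>C x) = (a * b) *\<^sub>C x"
    and scaleC_one: "1 *\<^sub>C x = x"
    and scaleR_scaleC: "scaleR r x = complex_of_real r *\<^sub>C x"

class complex_inner = complex_vector + real_normed_vector +
  fixes cinner :: "'a \<Rightarrow> 'a \<Rightarrow> complex"
  assumes cinner_conj: "cinner x y = cnj (cinner y x)"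
    and cinner_add_left: "cinner (x + y) z = cinner x z + cinner y z"
    and cinner_scaleC_left: "cinner (a *\<^sub>C x) y = a * cinner x y"
    and cinner_self_nonneg: "0 \<le> Re (cinner x x)"
    and cinner_self_eq_zero: "cinner x x = 0 \<longleftrightarrow> x = 0"
    and norm_eq_sqrt_cinner: "norm x = sqrt (Re (cinner x x))"

class chilbert_space = complex_inner + complete_space

definition cspan :: "'a::complex_vector set \<Rightarrow> 'a set" where
  "cspan S = {(\<Sum>x\<in>F. c x *\<^sub>C x) | F c. finite F \<and> F \<subseteq> S}"

definition infinite_dimensional :: "'a::complex_vector itself \<Rightarrow> bool" where
  "infinite_dimensional _ \<longleftrightarrow> (\<forall>S::'a set. finite S \<longrightarrow> cspan S \<noteq> UNIV)"

definition csubspace :: "'a::complex_vector set \<Rightarrow> bool" where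
  "csubspace D \<longleftrightarrow> 0 \<in> D \<and> (\<forall>x\<in>D. \<forall>y\<in>D. x + y \<in> D) \<and> (\<forall>c. \<forall>x\<in>D. c *\<^sub>C x \<in> D)"

text \<open>A form is a pair (domain, values); values outside the domain are normalised
  to 0, so that equality of forms is HOL equality.\<close>
type_synonym 'a form = "'a set \<times> ('a \<Rightarrow> 'a \<Rightarrow> complex)"

definition fdom :: "'a form \<Rightarrow> 'a set" where "fdom t = fst t"
definition fval :: "'a form \<Rightarrow> 'a \<Rightarrow> 'a \<Rightarrow> complex" where "fval t = snd t"

definition is_form :: "'a::complex_inner form \<Rightarrow> bool" where
  "is_form t \<longleftrightarrow> csubspace (fdom t) \<and> closure (fdom t) = UNIV \<and>
     (\<forall>x\<in>fdom t. \<forall>x'\<in>fdom t. \<forall>y\<in>fdom t. fval t (x + x') y = fval t x y + fval t x' y) \<and>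
     (\<forall>c. \<forall>x\<in>fdom t. \<forall>y\<in>fdom t. fval t (c *\<^sub>C x) y = c * fval t x y) \<and>
     (\<forall>x\<in>fdom t. \<forall>y\<in>fdom t. \<forall>y'\<in>fdom t. fval t x (y + y') = fval t x y + fval t x y') \<and>
     (\<forall>c. \<forall>x\<in>fdom t. \<forall>y\<in>fdom t. fval t x (c *\<^sub>C y) = cnj c * fval t x y) \<and>
     (\<forall>x y. x \<notin> fdom t \<or> y \<notin> fdom t \<longrightarrow> fval t x y = 0)"

definition form_positive :: "'a::complex_inner form \<Rightarrow> bool" where
  "form_positive t \<longleftrightarrow> (\<forall>x\<in>fdom t. Im (fval t x x) = 0 \<and> 0 \<le> Re (fval t x x))"

definition form_bounded :: "'a::complex_inner form \<Rightarrow> bool" where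
  "form_bounded t \<longleftrightarrow> bdd_above {Re (fval t x x) | x. x \<in> fdom t \<and> norm x = 1}"

definition form_plus :: "'a form \<Rightarrow> 'a form \<Rightarrow> 'a form" where
  "form_plus t s = (fdom t \<inter> fdom s,
     \<lambda>x y. if x \<in> fdom t \<inter> fdom s \<and> y \<in> fdom t \<inter> fdom s
           then fval t x y + fval s x y else 0)"

definition zero_form :: "'a form" where
  "zero_form = (UNIV, \<lambda>x y. 0)"

definition Vf :: "'a::complex_inner form set" where
  "Vf = {t. is_form t \<and> form_positive t \<and> (form_bounded t \<longrightarrow> fdom t = UNIV)}"

definition oplus_defined :: "'a::complex_inner form \<Rightarrow> 'a form \<Rightarrow> bool" where
  "oplus_defined t s \<longleftrightarrow> form_bounded t \<or> form_bounded s \<or> fdom t = fdom s"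

text \<open>Induced order of the generalized effect algebra (Vf; oplus, zero_form).\<close>
definition Vf_le :: "'a::complex_inner form \<Rightarrow> 'a form \<Rightarrow> bool" where
  "Vf_le t s \<longleftrightarrow> (\<exists>r\<in>Vf. oplus_defined t r \<and> form_plus t r = s)"

definition monotone_dedekind_down_sigma_complete :: "'a set \<Rightarrow> ('a \<Rightarrow> 'a \<Rightarrow> bool) \<Rightarrow> bool" where
  "monotone_dedekind_down_sigma_complete E le \<longleftrightarrow>
     (\<forall>x::nat \<Rightarrow> 'a. (\<forall>n. x n \<in> E) \<and> (\<forall>n. le (x (Suc n)) (x n)) \<longrightarrow>
        (\<exists>y\<in>E. (\<forall>n. le y (x n)) \<and> (\<forall>z\<in>E. (\<forall>n. le z (x n)) \<longrightarrow> le z y)))"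

end

theory Submission
  imports Defs
begin

lemma cinner_scaleC_right: "cinner x (c *\<^sub>C y) = cnj c * cinner x y"
  by (metis cinner_conj cinner_scaleC_left complex_cnj_cnj complex_cnj_mult)

lemma cinner_self_Im: "Im (cinner x x) = 0"
proof -
  have "Im (cinner x x) = Im (cnj (cinner x x))" using cinner_conj by metis
  thus ?thesis by simp
qed

lemma norm_scaleC: "norm (c *\<^sub>C x) = cmod c * norm (x::'a::complex_inner)"
proof -
  have "cinner (c *\<^sub>C x) (c *\<^sub>C x) = (c * cnj c) * cinner x x"
    by (simp add: cinner_scaleC_left cinner_scaleC_right)
  also have "c * cnj c = complex_of_real ((cmod c)^2)"
    by (metis complex_norm_square of_real_power)
  finally have "Re (cinner (c *\<^sub>C x) (c *\<^sub>C x)) = (cmod c)^2 * Re (cinner x x)"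
    by simp
  thus ?thesis
    by (simp add: norm_eq_sqrt_cinner real_sqrt_mult)
qed

lemma scaleC_diff_right: "c *\<^sub>C (x - y) = c *\<^sub>C x - c *\<^sub>C (y::'a::complex_vector)"
  by (metis diff_add_cancel eq_diff_eq scaleC_add_right)

lemma scaleC_minus1: "(-1) *\<^sub>C x = - (x::'a::complex_vector)"
  by (metis of_real_1 of_real_minus scaleR_minus1_left scaleR_scaleC)

lemma tendsto_scaleC:
  fixes a :: "nat \<Rightarrow> 'a::complex_inner"
  assumes "a \<longlonglongrightarrow> u" shows "(\<lambda>n. c *\<^sub>C a n) \<longlonglongrightarrow> c *\<^sub>C u"
proof -
  have "(\<lambda>n. a n - u) \<longlonglongrightarrow> 0" using assms by (simp add: LIM_zero)
  hence "(\<lambda>n. norm (a n - u)) \<longlonglongrightarrow> 0" by (simp add: tendsto_norm_zero)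
  hence "(\<lambda>n. cmod c * norm (a n - u)) \<longlonglongrightarrow> 0"
    by (metis mult_zero_right tendsto_mult_left)
  hence "(\<lambda>n. norm (c *\<^sub>C a n - c *\<^sub>C u)) \<longlonglongrightarrow> 0"
    by (simp add: norm_scaleC flip: scaleC_diff_right)
  hence "(\<lambda>n. c *\<^sub>C a n - c *\<^sub>C u) \<longlonglongrightarrow> 0" by (simp add: tendsto_norm_zero_iff)
  thus ?thesis by (simp add: LIM_zero_iff)
qed

section \<open>Forms\<close>

lemma form_dom:
  assumes "is_form t"
  shows "0 \<in> fdom t" "x \<in> fdom t \<Longrightarrow> y \<in> fdom t \<Longrightarrow> x + y \<in> fdom t"
    "x \<in> fdom t \<Longrightarrow> c *\<^sub>C x \<in> fdom t"
  using assms unfolding is_form_def csubspace_def by auto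

lemma form_dom2:
  assumes "is_form t"
  shows "x \<in> fdom t \<Longrightarrow> r *\<^sub>R x \<in> fdom t" "x \<in> fdom t \<Longrightarrow> - x \<in> fdom t"
    "x \<in> fdom t \<Longrightarrow> y \<in> fdom t \<Longrightarrow> x - y \<in> fdom t"
proof -
  show 1: "x \<in> fdom t \<Longrightarrow> r *\<^sub>R x \<in> fdom t" for r x
    using form_dom(3)[OF assms] by (simp add: scaleR_scaleC)
  show 2: "x \<in> fdom t \<Longrightarrow> - x \<in> fdom t" for x using 1[of x "-1"] by simp
  show "x \<in> fdom t \<Longrightarrow> y \<in> fdom t \<Longrightarrow> x - y \<in> fdom t"
    using 2 form_dom(2)[OF assms] by (metis diff_conv_add_uminus)
qed

lemma form_dense: "is_form t \<Longrightarrow> closure (fdom t) = UNIV"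
  unfolding is_form_def by auto

lemma form_lin:
  assumes "is_form t" and x: "x \<in> fdom t" and x': "x' \<in> fdom t" and y: "y \<in> fdom t" and y': "y' \<in> fdom t"
  shows "fval t (x + x') y = fval t x y + fval t x' y"
    "fval t (c *\<^sub>C x) y = c * fval t x y"
    "fval t x (y + y') = fval t x y + fval t x y'"
    "fval t x (c *\<^sub>C y) = cnj c * fval t x y"
  using assms unfolding is_form_def by auto

lemma form_out: "is_form t \<Longrightarrow> x \<notin> fdom t \<or> y \<notin> fdom t \<Longrightarrow> fval t x y = 0"
  unfolding is_form_def by auto

lemma form_lin2:
  assumes "is_form t" and x: "x \<in> fdom t" and x': "x' \<in> fdom t" and y: "y \<in> fdom t" and y': "y' \<in> fdom t"
  shows "fval t (x - x') y = fval t x y - fval t x' y"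
    "fval t x (y - y') = fval t x y - fval t x y'"
    "fval t (r *\<^sub>R x) y = of_real r * fval t x y"
    "fval t x (r *\<^sub>R y) = of_real r * fval t x y"
proof -
  have "fval t ((x - x') + x') y = fval t (x - x') y + fval t x' y"
    using form_lin(1)[OF assms(1) form_dom2(3)[OF assms(1) x x'] x' y y] .
  thus "fval t (x - x') y = fval t x y - fval t x' y" by simp
  have "fval t x ((y - y') + y') = fval t x (y - y') + fval t x y'"
    using form_lin(3)[OF assms(1) x x form_dom2(3)[OF assms(1) y y'] y'] .
  thus "fval t x (y - y') = fval t x y - fval t x y'" by simp
  show "fval t (r *\<^sub>R x) y = of_real r * fval t x y"
    using form_lin(2)[OF assms] by (simp add: scaleR_scaleC)
  show "fval t x (r *\<^sub>R y) = of_real r * fval t x y"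
    using form_lin(4)[OF assms] by (simp add: scaleR_scaleC)
qed

lemma form_zero: "is_form t \<Longrightarrow> y \<in> fdom t \<Longrightarrow> fval t 0 y = 0"
  "is_form t \<Longrightarrow> y \<in> fdom t \<Longrightarrow> fval t y 0 = 0"
  using form_lin2(1)[of t 0 0 y y] form_lin2(2)[of t y y 0 0] form_dom(1)[of t] by auto

lemma pos_real:
  assumes "form_positive t" "x \<in> fdom t"
  shows "fval t x x = of_real (Re (fval t x x))" "cmod (fval t x x) = Re (fval t x x)"
    "0 \<le> Re (fval t x x)"
  using assms unfolding form_positive_def by (auto simp: complex_eq_iff cmod_eq_Re)

lemma form_expand:
  assumes "is_form t" "a \<in> fdom t" "b \<in> fdom t"
  shows "fval t (a + c *\<^sub>C b) (a + c *\<^sub>C b) =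
    fval t a a + cnj c * fval t a b + c * fval t b a + c * cnj c * fval t b b"
proof -
  have cb: "c *\<^sub>C b \<in> fdom t" using form_dom(3)[OF assms(1,3)] .
  have ab: "a + c *\<^sub>C b \<in> fdom t" using form_dom(2)[OF assms(1,2) cb] .
  have "fval t (a + c *\<^sub>C b) (a + c *\<^sub>C b) = fval t a (a + c *\<^sub>C b) + fval t (c *\<^sub>C b) (a + c *\<^sub>C b)"
    using form_lin(1)[OF assms(1,2) cb ab ab] .
  also have "\<dots> = fval t a a + fval t a (c *\<^sub>C b) + (fval t (c *\<^sub>C b) a + fval t (c *\<^sub>C b) (c *\<^sub>C b))"
    using form_lin(3)[OF assms(1,2) assms(2) assms(2) cb] form_lin(3)[OF assms(1) cb cb assms(2) cb] by simp
  also have "\<dots> = fval t a a + cnj c * fval t a b + c * fval t b a + c * cnj c * fval t b b"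
    using form_lin(2,4)[OF assms(1)] assms cb by (simp add: algebra_simps)
  finally show ?thesis .
qed

lemma form_polar:
  assumes "is_form t" "a \<in> fdom t" "b \<in> fdom t"
  shows "4 * fval t a b = fval t (a + 1 *\<^sub>C b) (a + 1 *\<^sub>C b) - fval t (a + (-1) *\<^sub>C b) (a + (-1) *\<^sub>C b)
     + \<i> * fval t (a + \<i> *\<^sub>C b) (a + \<i> *\<^sub>C b) - \<i> * fval t (a + (-\<i>) *\<^sub>C b) (a + (-\<i>) *\<^sub>C b)"
  unfolding form_expand[OF assms]
  by (simp add: algebra_simps)

lemma norm_add_unit: "cmod c = 1 \<Longrightarrow> norm (a + c *\<^sub>C b) \<le> norm a + norm (b::'a::complex_inner)"
  by (metis mult_1 norm_scaleC norm_triangle_ineq)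

lemma tri4: "cmod (A - B + \<i>*C - \<i>*D) \<le> cmod A + cmod B + cmod C + cmod D"
proof -
  have "cmod (A - B + \<i>*C - \<i>*D) \<le> cmod (A - B + \<i>*C) + cmod (\<i>*D)" by (rule norm_triangle_ineq4)
  also have "\<dots> \<le> cmod (A - B) + cmod(\<i>*C) + cmod(\<i>*D)" using norm_triangle_ineq[of "A - B" "\<i>*C"] by simp
  also have "\<dots> \<le> cmod A + cmod B + cmod(\<i>*C) + cmod(\<i>*D)" using norm_triangle_ineq4[of A B] by simp
  finally show ?thesis by (simp add: norm_mult)
qed

lemma form_bound1:
  assumes "is_form t" "form_positive t" "M \<ge> 0" "\<forall>w\<in>fdom t. Re (fval t w w) \<le> M * (norm w)^2"
    "a \<in> fdom t" "b \<in> fdom t"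
  shows "cmod (fval t a b) \<le> M * (norm a + norm b)^2"
proof -
  have Q: "cmod (fval t (a + c *\<^sub>C b) (a + c *\<^sub>C b)) \<le> M * (norm a + norm b)^2" if "cmod c = 1" for c
  proof -
    have w: "a + c *\<^sub>C b \<in> fdom t" using form_dom[OF assms(1)] assms(5,6) by blast
    have "cmod (fval t (a + c *\<^sub>C b) (a + c *\<^sub>C b)) = Re (fval t (a + c *\<^sub>C b) (a + c *\<^sub>C b))"
      using pos_real(2)[OF assms(2) w] .
    also have "\<dots> \<le> M * (norm (a + c *\<^sub>C b))^2" using assms(4) w by blast
    also have "\<dots> \<le> M * (norm a + norm b)^2"
      using norm_add_unit[OF that, of a b] assms(3) by (simp add: mult_left_mono power_mono)
    finally show ?thesis .
  qed
  have "4 * cmod (fval t a b) = cmod (4 * fval t a b)" by (simp add: norm_mult)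
  also have "\<dots> \<le> cmod (fval t (a + 1 *\<^sub>C b) (a + 1 *\<^sub>C b)) + cmod (fval t (a + (-1) *\<^sub>C b) (a + (-1) *\<^sub>C b))
     + cmod (fval t (a + \<i> *\<^sub>C b) (a + \<i> *\<^sub>C b)) + cmod (fval t (a + (-\<i>) *\<^sub>C b) (a + (-\<i>) *\<^sub>C b))"
    unfolding form_polar[OF assms(1,5,6)] by (rule tri4)
  also have "\<dots> \<le> 4 * (M * (norm a + norm b)^2)"
    using Q[of 1] Q[of "-1"] Q[of "\<i>"] Q[of "-\<i>"] by simp
  finally show ?thesis by simp
qed

lemma form_bound2:
  assumes "is_form t" "form_positive t" "M \<ge> 0" "\<forall>w\<in>fdom t. Re (fval t w w) \<le> M * (norm w)^2"
    "a \<in> fdom t" "b \<in> fdom t"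
  shows "cmod (fval t a b) \<le> 4 * M * norm a * norm b"
proof (cases "a = 0 \<or> b = 0")
  case True thus ?thesis using form_zero[OF assms(1)] assms(5,6) by auto
next
  case False
  define na where "na = norm a"
  define nb where "nb = norm b"
  have na: "na > 0" and nb: "nb > 0" using False by (auto simp: na_def nb_def)
  define s where "s = sqrt (nb / na)"
  have s: "s > 0" using na nb by (simp add: s_def)
  have s2: "s^2 = nb / na" using na nb by (simp add: s_def)
  have "fval t (s *\<^sub>R a) ((1/s) *\<^sub>R b) = of_real s * (of_real (1/s) * fval t a b)"
    using form_lin2(3,4)[OF assms(1)] form_dom2(1)[OF assms(1)] assms(5,6) by simp
  also have "\<dots> = fval t a b" using s by (simp add: of_real_def)
  finally have eq: "fval t a b = fval t (s *\<^sub>R a) ((1/s) *\<^sub>R b)" by simp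
  have "cmod (fval t a b) \<le> M * (norm (s *\<^sub>R a) + norm ((1/s) *\<^sub>R b))^2"
    unfolding eq by (rule form_bound1[OF assms(1-4)]) (use form_dom2(1)[OF assms(1)] assms(5,6) in auto)
  also have "norm (s *\<^sub>R a) + norm ((1/s) *\<^sub>R b) = s * na + nb / s"
    using s by (simp add: na_def nb_def)
  also have "(s * na + nb / s)^2 = s^2 * na^2 + nb^2 / s^2 + 2 * na * nb"
    using s by (simp add: power2_sum field_simps power2_eq_square)
  also have "\<dots> = 4 * na * nb" unfolding s2 using na nb by (simp add: field_simps power2_eq_square)
  finally show ?thesis by (simp add: na_def nb_def mult.assoc)
qed

lemma form_est:
  assumes "is_form t" "form_positive t" "M \<ge> 0" "\<forall>w\<in>fdom t. Re (fval t w w) \<le> M * (norm w)^2"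
    "a \<in> fdom t" "b \<in> fdom t" "a' \<in> fdom t" "b' \<in> fdom t"
  shows "cmod (fval t a b - fval t a' b') \<le> 4 * M * (norm (a - a') * norm b + norm a' * norm (b - b'))"
proof -
  have "fval t a b - fval t a' b' = fval t (a - a') b + fval t a' (b - b')"
    using form_lin2(1,2)[OF assms(1)] assms(5-8) by simp
  hence "cmod (fval t a b - fval t a' b') \<le> cmod (fval t (a - a') b) + cmod (fval t a' (b - b'))"
    by (simp add: norm_triangle_ineq)
  also have "\<dots> \<le> 4 * M * norm (a - a') * norm b + 4 * M * norm a' * norm (b - b')"
    using form_bound2[OF assms(1-4)] form_dom2(3)[OF assms(1)] assms(5-8) by (intro add_mono) auto
  finally show ?thesis by (simp add: algebra_simps)
qed

lemma bounded_M:
  assumes "is_form t" "form_positive t" "form_bounded t"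
  shows "\<exists>M\<ge>0. \<forall>w\<in>fdom t. Re (fval t w w) \<le> M * (norm w)^2"
proof -
  obtain B where B: "\<And>x. x \<in> fdom t \<Longrightarrow> norm x = 1 \<Longrightarrow> Re (fval t x x) \<le> B"
    using assms(3) unfolding form_bounded_def bdd_above_def by blast
  have "Re (fval t w w) \<le> max B 0 * (norm w)^2" if w: "w \<in> fdom t" for w
  proof (cases "w = 0")
    case True thus ?thesis using form_zero[OF assms(1) w] w by simp
  next
    case False
    define n where "n = norm w"
    have n: "n > 0" using False by (simp add: n_def)
    have e: "(1/n) *\<^sub>R w \<in> fdom t" using form_dom2(1)[OF assms(1) w] .
    have "norm ((1/n) *\<^sub>R w) = 1" using n by (simp add: n_def)
    hence "Re (fval t ((1/n) *\<^sub>R w) ((1/n) *\<^sub>R w)) \<le> B" using B e by blast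
    moreover have "fval t ((1/n) *\<^sub>R w) ((1/n) *\<^sub>R w) = of_real ((1/n)*(1/n)) * fval t w w"
      using form_lin2(3,4)[OF assms(1)] form_dom2(1)[OF assms(1)] w by simp
    ultimately have "(1/n)*(1/n) * Re (fval t w w) \<le> B" by simp
    hence "Re (fval t w w) \<le> B * n^2" using n by (simp add: field_simps power2_eq_square)
    also have "\<dots> \<le> max B 0 * n^2" by (simp add: mult_right_mono)
    finally show ?thesis by (simp add: n_def)
  qed
  thus ?thesis by (intro exI[of _ "max B 0"]) auto
qed

lemma M_bounded:
  assumes "\<forall>w\<in>fdom t. Re (fval t w w) \<le> M * (norm w)^2"
  shows "form_bounded t"
  unfolding form_bounded_def bdd_above_def using assms by (intro exI[of _ M]) auto

lemma form_seq_diff: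
  assumes "is_form t" "form_positive t" "M \<ge> 0" "\<forall>w\<in>fdom t. Re (fval t w w) \<le> M * (norm w)^2"
    "\<And>n. a n \<in> fdom t" "\<And>n. b n \<in> fdom t" "\<And>n. a' n \<in> fdom t" "\<And>n. b' n \<in> fdom t"
    "a \<longlonglongrightarrow> u" "a' \<longlonglongrightarrow> u" "b \<longlonglongrightarrow> v" "b' \<longlonglongrightarrow> v"
  shows "(\<lambda>n. fval t (a n) (b n) - fval t (a' n) (b' n)) \<longlonglongrightarrow> 0"
proof (rule Lim_null_comparison)
  show "\<forall>\<^sub>F n in sequentially. norm (fval t (a n) (b n) - fval t (a' n) (b' n))
     \<le> 4 * M * (norm (a n - a' n) * norm (b n) + norm (a' n) * norm (b n - b' n))"
    using form_est[OF assms(1-4) assms(5-8)] by auto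
  have "(\<lambda>n. 4 * M * (norm (a n - a' n) * norm (b n) + norm (a' n) * norm (b n - b' n)))
     \<longlonglongrightarrow> 4 * M * (norm (u - u) * norm v + norm u * norm (v - v))"
    using assms(9-12) by (intro tendsto_intros)
  thus "(\<lambda>n. 4 * M * (norm (a n - a' n) * norm (b n) + norm (a' n) * norm (b n - b' n))) \<longlonglongrightarrow> 0"
    by simp
qed

lemma form_cont:
  assumes "is_form t" "form_positive t" "M \<ge> 0" "\<forall>w\<in>fdom t. Re (fval t w w) \<le> M * (norm w)^2"
    "\<And>n. a n \<in> fdom t" "\<And>n. b n \<in> fdom t" "u \<in> fdom t" "v \<in> fdom t"
    "a \<longlonglongrightarrow> u" "b \<longlonglongrightarrow> v"
  shows "(\<lambda>n. fval t (a n) (b n)) \<longlonglongrightarrow> fval t u v"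
proof -
  have "(\<lambda>n. fval t (a n) (b n) - fval t ((\<lambda>_. u) n) ((\<lambda>_. v) n)) \<longlonglongrightarrow> 0"
    by (rule form_seq_diff[OF assms(1-6)]) (use assms(7-10) in auto)
  thus ?thesis by (simp add: LIM_zero_iff)
qed

lemma form_cauchy:
  assumes "is_form t" "form_positive t" "M \<ge> 0" "\<forall>w\<in>fdom t. Re (fval t w w) \<le> M * (norm w)^2"
    "\<And>n. a n \<in> fdom t" "\<And>n. b n \<in> fdom t" "a \<longlonglongrightarrow> u" "b \<longlonglongrightarrow> v"
  shows "Cauchy (\<lambda>n. fval t (a n) (b n))"
proof (rule CauchyI)
  fix e :: real assume e: "e > 0"
  have ca: "Cauchy a" and cb: "Cauchy b" using assms(7,8) by (auto intro: LIMSEQ_imp_Cauchy)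
  obtain K1 where K1: "K1 > 0" "\<And>n. norm (a n) \<le> K1" using Cauchy_Bseq[OF ca] by (auto elim: BseqE)
  obtain K2 where K2: "K2 > 0" "\<And>n. norm (b n) \<le> K2" using Cauchy_Bseq[OF cb] by (auto elim: BseqE)
  define K where "K = K1 + K2"
  have K: "K > 0" "\<And>n. norm (a n) \<le> K" "\<And>n. norm (b n) \<le> K"
    using K1 K2 unfolding K_def by (smt (verit))+
  define d where "d = e / (8 * (M + 1) * K)"
  have d: "d > 0" using e K assms(3) by (simp add: d_def)
  obtain N1 where N1: "\<And>m n. m \<ge> N1 \<Longrightarrow> n \<ge> N1 \<Longrightarrow> norm (a m - a n) < d"
    using CauchyD[OF ca d] by blast
  obtain N2 where N2: "\<And>m n. m \<ge> N2 \<Longrightarrow> n \<ge> N2 \<Longrightarrow> norm (b m - b n) < d"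
    using CauchyD[OF cb d] by blast
  show "\<exists>N. \<forall>m\<ge>N. \<forall>n\<ge>N. norm (fval t (a m) (b m) - fval t (a n) (b n)) < e"
  proof (intro exI[of _ "max N1 N2"] allI impI)
    fix m n assume mn: "m \<ge> max N1 N2" "n \<ge> max N1 N2"
    have "norm (fval t (a m) (b m) - fval t (a n) (b n)) \<le> 4 * M * (norm (a m - a n) * norm (b m) + norm (a n) * norm (b m - b n))"
      using form_est[OF assms(1-4) assms(5,6) assms(5,6)] by simp
    also have "\<dots> \<le> 4 * M * (d * K + K * d)"
      using N1[of m n] N2[of m n] mn K assms(3) d
      by (intro mult_left_mono add_mono mult_mono) auto
    also have "\<dots> = 8 * M * K * d" by simp
    also have "\<dots> = (M*e) * (8*K) / ((M+1)*(8*K))" unfolding d_def by (simp add: algebra_simps)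
    also have "\<dots> = (M*e) / (M+1)" using K(1) by (rule_tac mult_divide_mult_cancel_right) simp
    also have "\<dots> = e * (M / (M + 1))" by simp
    also have "\<dots> < e * 1" using e assms(3) by (intro mult_strict_left_mono) auto
    finally show "norm (fval t (a m) (b m) - fval t (a n) (b n)) < e" by simp
  qed
qed

lemma form_ext:
  fixes t :: "'a::complex_inner form"
  assumes t: "is_form t" "form_positive t" "M \<ge> 0" "\<forall>w\<in>fdom t. Re (fval t w w) \<le> M * (norm w)^2"
  shows "\<exists>T. fdom T = UNIV \<and> is_form T \<and> form_positive T \<and> (\<forall>w. Re (fval T w w) \<le> M * (norm w)^2)
     \<and> (\<forall>u\<in>fdom t. \<forall>v\<in>fdom t. fval T u v = fval t u v)"
proof -
  define D where "D = fdom t"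
  have "\<forall>u. \<exists>s. (\<forall>n. s n \<in> D) \<and> s \<longlonglongrightarrow> u"
    using form_dense[OF t(1)] closure_sequential unfolding D_def by blast
  then obtain S where S: "\<And>u n. S u n \<in> D" "\<And>u. S u \<longlonglongrightarrow> u" by metis
  have SD: "\<And>u n. S u n \<in> fdom t" using S unfolding D_def by auto
  define F where "F u v = lim (\<lambda>n. fval t (S u n) (S v n))" for u v
  have key: "(\<lambda>n. fval t (a n) (b n)) \<longlonglongrightarrow> F u v"
    if ab: "\<And>n. a n \<in> D" "\<And>n. b n \<in> D" "a \<longlonglongrightarrow> u" "b \<longlonglongrightarrow> v" for a b u v
  proof -
    have "Cauchy (\<lambda>n. fval t (S u n) (S v n))"
      by (rule form_cauchy[OF t SD SD S(2) S(2)])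
    hence "convergent (\<lambda>n. fval t (S u n) (S v n))" by (simp add: Cauchy_convergent_iff)
    hence c: "(\<lambda>n. fval t (S u n) (S v n)) \<longlonglongrightarrow> F u v" by (simp add: F_def convergent_LIMSEQ_iff)
    have d: "(\<lambda>n. fval t (a n) (b n) - fval t (S u n) (S v n)) \<longlonglongrightarrow> 0"
      by (rule form_seq_diff[OF t ab(1,2)[unfolded D_def] SD SD ab(3) S(2) ab(4) S(2)])
    have "(\<lambda>n. (fval t (a n) (b n) - fval t (S u n) (S v n)) + fval t (S u n) (S v n)) \<longlonglongrightarrow> 0 + F u v"
      by (rule tendsto_add[OF d c])
    thus ?thesis by simp
  qed
  define T where "T = ((UNIV::'a set), F)"
  have fT: "fdom T = UNIV" "fval T = F" by (auto simp: T_def fdom_def fval_def)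
  have add1: "F (x + x') y = F x y + F x' y" for x x' y
  proof -
    have "(\<lambda>n. fval t (S x n + S x' n) (S y n)) \<longlonglongrightarrow> F (x + x') y"
      by (rule key) (use S form_dom[OF t(1)] in \<open>auto simp: D_def intro: tendsto_add\<close>)
    moreover have "(\<lambda>n. fval t (S x n + S x' n) (S y n)) = (\<lambda>n. fval t (S x n) (S y n) + fval t (S x' n) (S y n))"
      using form_lin(1)[OF t(1) SD SD SD SD] by simp
    moreover have "(\<lambda>n. fval t (S x n) (S y n) + fval t (S x' n) (S y n)) \<longlonglongrightarrow> F x y + F x' y"
      by (rule tendsto_add; rule key; rule S)
    ultimately show ?thesis using LIMSEQ_unique by metis
  qed
  have add2: "F x (y + y') = F x y + F x y'" for x y y'
  proof -
    have "(\<lambda>n. fval t (S x n) (S y n + S y' n)) \<longlonglongrightarrow> F x (y + y')"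
      by (rule key) (use S form_dom[OF t(1)] in \<open>auto simp: D_def intro: tendsto_add\<close>)
    moreover have "(\<lambda>n. fval t (S x n) (S y n + S y' n)) = (\<lambda>n. fval t (S x n) (S y n) + fval t (S x n) (S y' n))"
      using form_lin(3)[OF t(1) SD SD SD SD] by simp
    moreover have "(\<lambda>n. fval t (S x n) (S y n) + fval t (S x n) (S y' n)) \<longlonglongrightarrow> F x y + F x y'"
      by (rule tendsto_add; rule key; rule S)
    ultimately show ?thesis using LIMSEQ_unique by metis
  qed
  have sc1: "F (c *\<^sub>C x) y = c * F x y" for c x y
  proof -
    have "(\<lambda>n. fval t (c *\<^sub>C S x n) (S y n)) \<longlonglongrightarrow> F (c *\<^sub>C x) y"
      by (rule key) (use S form_dom[OF t(1)] in \<open>auto simp: D_def intro: tendsto_scaleC\<close>)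
    moreover have "(\<lambda>n. fval t (c *\<^sub>C S x n) (S y n)) = (\<lambda>n. c * fval t (S x n) (S y n))"
      using form_lin(2)[OF t(1) SD SD SD SD] by simp
    moreover have "(\<lambda>n. c * fval t (S x n) (S y n)) \<longlonglongrightarrow> c * F x y"
      by (rule tendsto_mult[OF tendsto_const]; rule key; rule S)
    ultimately show ?thesis using LIMSEQ_unique by metis
  qed
  have sc2: "F x (c *\<^sub>C y) = cnj c * F x y" for c x y
  proof -
    have "(\<lambda>n. fval t (S x n) (c *\<^sub>C S y n)) \<longlonglongrightarrow> F x (c *\<^sub>C y)"
      by (rule key) (use S form_dom[OF t(1)] in \<open>auto simp: D_def intro: tendsto_scaleC\<close>)
    moreover have "(\<lambda>n. fval t (S x n) (c *\<^sub>C S y n)) = (\<lambda>n. cnj c * fval t (S x n) (S y n))"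
      using form_lin(4)[OF t(1) SD SD SD SD] by simp
    moreover have "(\<lambda>n. cnj c * fval t (S x n) (S y n)) \<longlonglongrightarrow> cnj c * F x y"
      by (rule tendsto_mult[OF tendsto_const]; rule key; rule S)
    ultimately show ?thesis using LIMSEQ_unique by metis
  qed
  have isT: "is_form T"
    unfolding is_form_def fT csubspace_def using add1 add2 sc1 sc2 by auto
  have conv: "(\<lambda>n. fval t (S w n) (S w n)) \<longlonglongrightarrow> F w w" for w by (rule key; rule S)
  have pos: "Im (F w w) = 0 \<and> 0 \<le> Re (F w w)" for w
  proof
    have "(\<lambda>n. Im (fval t (S w n) (S w n))) \<longlonglongrightarrow> Im (F w w)" by (intro tendsto_Im conv)
    moreover have "(\<lambda>n. Im (fval t (S w n) (S w n))) = (\<lambda>n. 0)"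
      using t(2) SD unfolding form_positive_def by auto
    ultimately show "Im (F w w) = 0" using LIMSEQ_unique tendsto_const by metis
    have "(\<lambda>n. Re (fval t (S w n) (S w n))) \<longlonglongrightarrow> Re (F w w)" by (intro tendsto_Re conv)
    thus "0 \<le> Re (F w w)"
      by (rule LIMSEQ_le_const) (use pos_real(3)[OF t(2) SD] in auto)
  qed
  have bd: "Re (F w w) \<le> M * (norm w)^2" for w
  proof (rule LIMSEQ_le)
    show "(\<lambda>n. Re (fval t (S w n) (S w n))) \<longlonglongrightarrow> Re (F w w)" by (intro tendsto_Re conv)
    show "(\<lambda>n. M * (norm (S w n))^2) \<longlonglongrightarrow> M * (norm w)^2" using S by (intro tendsto_intros)
    show "\<exists>N. \<forall>n\<ge>N. Re (fval t (S w n) (S w n)) \<le> M * (norm (S w n))^2" using t(4) SD by auto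
  qed
  have agree: "F u v = fval t u v" if "u \<in> fdom t" "v \<in> fdom t" for u v
  proof -
    have "(\<lambda>n. fval t ((\<lambda>_. u) n) ((\<lambda>_. v) n)) \<longlonglongrightarrow> F u v"
      using that by (rule_tac key) (auto simp: D_def)
    thus ?thesis by (rule LIMSEQ_unique[OF _ tendsto_const])
  qed
  show ?thesis
    by (rule exI[of _ T]) (simp add: fT isT pos bd agree form_positive_def)
qed

lemma Vf_D: "t \<in> Vf \<Longrightarrow> is_form t" "t \<in> Vf \<Longrightarrow> form_positive t"
  "t \<in> Vf \<Longrightarrow> form_bounded t \<Longrightarrow> fdom t = UNIV"
  unfolding Vf_def by auto

lemma le_D:
  assumes "t \<in> Vf" "s \<in> Vf" "Vf_le t s"
  shows "fdom s \<subseteq> fdom t" "fdom s = fdom t \<or> form_bounded t"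
    "\<forall>x\<in>fdom s. Re (fval t x x) \<le> Re (fval s x x)"
proof -
  obtain r where r: "r \<in> Vf" "oplus_defined t r" "form_plus t r = s"
    using assms(3) unfolding Vf_le_def by blast
  have ds: "fdom s = fdom t \<inter> fdom r" using r(3) by (auto simp: form_plus_def fdom_def)
  have vs: "fval s x y = fval t x y + fval r x y" if "x \<in> fdom s" "y \<in> fdom s" for x y
    using r(3) that ds by (auto simp: form_plus_def fdom_def fval_def)
  show "fdom s \<subseteq> fdom t" using ds by auto
  show "fdom s = fdom t \<or> form_bounded t"
    using r(2) Vf_D(3)[OF r(1)] ds unfolding oplus_defined_def by auto
  show "\<forall>x\<in>fdom s. Re (fval t x x) \<le> Re (fval s x x)"
    using vs pos_real(3)[OF Vf_D(2)[OF r(1)]] ds by auto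
qed

lemma le_I:
  fixes t s :: "'a::complex_inner form"
  assumes "t \<in> Vf" "s \<in> Vf" "fdom s \<subseteq> fdom t" "fdom s = fdom t \<or> form_bounded t"
    "\<forall>x\<in>fdom s. Re (fval t x x) \<le> Re (fval s x x)"
  shows "Vf_le t s"
proof -
  have ft: "is_form t" "form_positive t" and fs: "is_form s" "form_positive s"
    using assms(1,2) unfolding Vf_def by auto
  define r0 where "r0 = (fdom s, \<lambda>x y. if x \<in> fdom s \<and> y \<in> fdom s then fval s x y - fval t x y else 0)"
  have r0: "fdom r0 = fdom s" "fval r0 = (\<lambda>x y. if x \<in> fdom s \<and> y \<in> fdom s then fval s x y - fval t x y else 0)"
    by (auto simp: r0_def fdom_def fval_def)
  have st: "\<And>x. x \<in> fdom s \<Longrightarrow> x \<in> fdom t" using assms(3) by auto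
  have isr: "is_form r0"
  proof -
    have "csubspace (fdom s)" "closure (fdom s) = UNIV" using fs(1) unfolding is_form_def by auto
    moreover have "fval r0 (x + x') y = fval r0 x y + fval r0 x' y" if "x\<in>fdom s" "x'\<in>fdom s" "y\<in>fdom s" for x x' y
      using form_lin(1)[OF fs(1) that(1,2,3,3)] form_lin(1)[OF ft(1) st[OF that(1)] st[OF that(2)] st[OF that(3)] st[OF that(3)]]
        form_dom(2)[OF fs(1) that(1,2)] that by (simp add: r0)
    moreover have "fval r0 (c *\<^sub>C x) y = c * fval r0 x y" if "x\<in>fdom s" "y\<in>fdom s" for c x y
      using form_lin(2)[OF fs(1) that(1,1,2,2)] form_lin(2)[OF ft(1) st[OF that(1)] st[OF that(1)] st[OF that(2)] st[OF that(2)]]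
        form_dom(3)[OF fs(1) that(1)] that by (simp add: r0 algebra_simps)
    moreover have "fval r0 x (y + y') = fval r0 x y + fval r0 x y'" if "x\<in>fdom s" "y\<in>fdom s" "y'\<in>fdom s" for x y y'
      using form_lin(3)[OF fs(1) that(1,1,2,3)] form_lin(3)[OF ft(1) st[OF that(1)] st[OF that(1)] st[OF that(2)] st[OF that(3)]]
        form_dom(2)[OF fs(1) that(2,3)] that by (simp add: r0)
    moreover have "fval r0 x (c *\<^sub>C y) = cnj c * fval r0 x y" if "x\<in>fdom s" "y\<in>fdom s" for c x y
      using form_lin(4)[OF fs(1) that(1,1,2,2)] form_lin(4)[OF ft(1) st[OF that(1)] st[OF that(1)] st[OF that(2)] st[OF that(2)]]
        form_dom(3)[OF fs(1) that(2)] that by (simp add: r0 algebra_simps)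
    ultimately show ?thesis unfolding is_form_def r0(1) by (simp add: r0)
  qed
  have posr: "form_positive r0"
    using fs(2) ft(2) assms(5) st unfolding form_positive_def by (auto simp: r0)
  have plus: "form_plus t R = s" if R: "is_form R" "fdom t \<inter> fdom R = fdom s"
    "\<forall>x\<in>fdom s. \<forall>y\<in>fdom s. fval R x y = fval r0 x y" for R
  proof -
    have "form_plus t R = (fdom s, fval s)"
      unfolding form_plus_def R(2)
    proof (rule arg_cong[where f="Pair (fdom s)"], intro ext)
      fix x y
      show "(if x \<in> fdom s \<and> y \<in> fdom s then fval t x y + fval R x y else 0) = fval s x y"
        using R(3) form_out[OF fs(1)] by (auto simp: r0)
    qed
    thus ?thesis by (simp add: fdom_def fval_def)
  qed
  show ?thesis
  proof (cases "form_bounded r0")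
    case True
    obtain M where M: "M \<ge> 0" "\<forall>w\<in>fdom r0. Re (fval r0 w w) \<le> M * (norm w)^2"
      using bounded_M[OF isr posr True] by blast
    obtain R where R: "fdom R = UNIV" "is_form R" "form_positive R" "\<forall>w. Re (fval R w w) \<le> M * (norm w)^2"
      "\<forall>u\<in>fdom r0. \<forall>v\<in>fdom r0. fval R u v = fval r0 u v"
      using form_ext[OF isr posr M] by blast
    have bR: "form_bounded R" using R(4) by (intro M_bounded) auto
    have RV: "R \<in> Vf" using R bR unfolding Vf_def by auto
    have eqd: "fdom t = fdom s"
    proof (rule ccontr)
      assume ne: "fdom t \<noteq> fdom s"
      hence bt: "form_bounded t" using assms(4) by auto
      obtain M' where M': "M' \<ge> 0" "\<forall>w\<in>fdom t. Re (fval t w w) \<le> M' * (norm w)^2"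
        using bounded_M[OF ft bt] by blast
      have "\<forall>w\<in>fdom s. Re (fval s w w) \<le> (M' + M) * (norm w)^2"
      proof
        fix w assume w: "w \<in> fdom s"
        have "Re (fval s w w) = Re (fval t w w) + Re (fval r0 w w)" using w by (simp add: r0)
        also have "\<dots> \<le> M' * (norm w)^2 + M * (norm w)^2" using M M' w st r0(1) by (intro add_mono) auto
        finally show "Re (fval s w w) \<le> (M' + M) * (norm w)^2" by (simp add: algebra_simps)
      qed
      hence "form_bounded s" by (rule M_bounded)
      hence "fdom s = UNIV" using Vf_D(3)[OF assms(2)] by auto
      thus False using ne assms(3) by auto
    qed
    have "form_plus t R = s" using R eqd r0(1) by (intro plus) auto
    moreover have "oplus_defined t R" using bR unfolding oplus_defined_def by auto
    ultimately show ?thesis using RV unfolding Vf_le_def by blast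
  next
    case False
    have RV: "r0 \<in> Vf" using isr posr False unfolding Vf_def by auto
    have "form_plus t r0 = s" using isr assms(3) by (intro plus) (auto simp: r0)
    moreover have "oplus_defined t r0" using assms(4) unfolding oplus_defined_def r0(1) by auto
    ultimately show ?thesis using RV unfolding Vf_le_def by blast
  qed
qed

lemma pos_real': "form_positive t \<Longrightarrow> x \<in> fdom t \<Longrightarrow> complex_of_real (Re (fval t x x)) = fval t x x"
  using pos_real(1) by metis

lemma eq_lim_eventually:
  fixes X Y :: "nat \<Rightarrow> 'b::t2_space"
  assumes "X \<longlonglongrightarrow> a" "Y \<longlonglongrightarrow> b" "\<And>n. n \<ge> N \<Longrightarrow> X n = Y n" shows "a = b"
proof -
  have "eventually (\<lambda>n. X n = Y n) sequentially" using assms(3) by (auto simp: eventually_sequentially)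
  hence "Y \<longlonglongrightarrow> a" using assms(1) by (rule Lim_transform_eventually[rotated])
  thus ?thesis using assms(2) by (rule LIMSEQ_unique)
qed

lemma polar_conv:
  assumes "\<And>k. is_form (X k)" "\<And>k. a \<in> fdom (X k)" "\<And>k. b \<in> fdom (X k)"
   "\<And>c. convergent (\<lambda>k. fval (X k) (a + c *\<^sub>C b) (a + c *\<^sub>C b))"
  shows "convergent (\<lambda>k. fval (X k) a b)"
proof -
  obtain l1 where l1: "(\<lambda>k. fval (X k) (a + 1 *\<^sub>C b) (a + 1 *\<^sub>C b)) \<longlonglongrightarrow> l1"
    using assms(4) unfolding convergent_def by blast
  obtain l2 where l2: "(\<lambda>k. fval (X k) (a + (-1) *\<^sub>C b) (a + (-1) *\<^sub>C b)) \<longlonglongrightarrow> l2"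
    using assms(4) unfolding convergent_def by blast
  obtain l3 where l3: "(\<lambda>k. fval (X k) (a + \<i> *\<^sub>C b) (a + \<i> *\<^sub>C b)) \<longlonglongrightarrow> l3"
    using assms(4) unfolding convergent_def by blast
  obtain l4 where l4: "(\<lambda>k. fval (X k) (a + (-\<i>) *\<^sub>C b) (a + (-\<i>) *\<^sub>C b)) \<longlonglongrightarrow> l4"
    using assms(4) unfolding convergent_def by blast
  have "(\<lambda>k. (fval (X k) (a + 1 *\<^sub>C b) (a + 1 *\<^sub>C b) - fval (X k) (a + (-1) *\<^sub>C b) (a + (-1) *\<^sub>C b)
     + \<i> * fval (X k) (a + \<i> *\<^sub>C b) (a + \<i> *\<^sub>C b) - \<i> * fval (X k) (a + (-\<i>) *\<^sub>C b) (a + (-\<i>) *\<^sub>C b)) / 4)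
     \<longlonglongrightarrow> (l1 - l2 + \<i> * l3 - \<i> * l4) / 4"
    by (intro tendsto_divide tendsto_diff tendsto_add tendsto_mult tendsto_const l1 l2 l3 l4) simp
  moreover have "(\<lambda>k. (fval (X k) (a + 1 *\<^sub>C b) (a + 1 *\<^sub>C b) - fval (X k) (a + (-1) *\<^sub>C b) (a + (-1) *\<^sub>C b)
     + \<i> * fval (X k) (a + \<i> *\<^sub>C b) (a + \<i> *\<^sub>C b) - \<i> * fval (X k) (a + (-\<i>) *\<^sub>C b) (a + (-\<i>) *\<^sub>C b)) / 4)
     = (\<lambda>k. fval (X k) a b)"
  proof
    fix k
    show "(fval (X k) (a + 1 *\<^sub>C b) (a + 1 *\<^sub>C b) - fval (X k) (a + (-1) *\<^sub>C b) (a + (-1) *\<^sub>C b)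
     + \<i> * fval (X k) (a + \<i> *\<^sub>C b) (a + \<i> *\<^sub>C b) - \<i> * fval (X k) (a + (-\<i>) *\<^sub>C b) (a + (-\<i>) *\<^sub>C b)) / 4
     = fval (X k) a b"
      using form_polar[OF assms(1-3), of k] by (simp add: field_simps)
  qed
  ultimately show ?thesis unfolding convergent_def by auto
qed


theorem theorem5p2:
  assumes "infinite_dimensional TYPE('a::chilbert_space)"
  shows "monotone_dedekind_down_sigma_complete (Vf :: 'a form set) Vf_le"
  unfolding monotone_dedekind_down_sigma_complete_def
proof (intro allI impI)
  fix x :: "nat \<Rightarrow> 'a form"
  assume "(\<forall>n. x n \<in> Vf) \<and> (\<forall>n. Vf_le (x (Suc n)) (x n))"
  hence xV: "\<And>n. x n \<in> Vf" and dec: "\<And>n. Vf_le (x (Suc n)) (x n)" by auto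
  have xf: "\<And>n. is_form (x n)" "\<And>n. form_positive (x n)" using xV unfolding Vf_def by auto
  have ld1: "\<And>n. fdom (x n) \<subseteq> fdom (x (Suc n))"
    and ld2: "\<And>n. fdom (x n) = fdom (x (Suc n)) \<or> form_bounded (x (Suc n))"
    and ld3: "\<And>n v. v \<in> fdom (x n) \<Longrightarrow> Re (fval (x (Suc n)) v v) \<le> Re (fval (x n) v v)"
    using le_D[OF xV xV dec] by auto
  have chain: "fdom (x n) \<subseteq> fdom (x (n+k)) \<and> (\<forall>v\<in>fdom (x n). Re (fval (x (n+k)) v v) \<le> Re (fval (x n) v v))" for n k
  proof (induction k)
    case 0 show ?case by simp
  next
    case (Suc k)
    have "fdom (x n) \<subseteq> fdom (x (Suc (n+k)))" using Suc ld1[of "n+k"] by auto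
    moreover have "\<forall>v\<in>fdom (x n). Re (fval (x (Suc (n+k))) v v) \<le> Re (fval (x n) v v)"
      using Suc ld3[of _ "n+k"] by (meson order_trans subsetD)
    ultimately show ?case by simp
  qed
  have ch1: "n \<le> m \<Longrightarrow> fdom (x n) \<subseteq> fdom (x m)"
    and ch2: "n \<le> m \<Longrightarrow> v \<in> fdom (x n) \<Longrightarrow> Re (fval (x m) v v) \<le> Re (fval (x n) v v)" for n m v
    using chain[of n "m-n"] by auto
  obtain N D where ND: "D = fdom (x N)" "\<And>n. n \<ge> N \<Longrightarrow> fdom (x n) = D" "\<And>n. fdom (x n) \<subseteq> D"
     "(\<exists>n. form_bounded (x n)) \<Longrightarrow> form_bounded (x N)" "\<not>(\<exists>n. form_bounded (x n)) \<Longrightarrow> \<forall>n. fdom (x n) = D"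
  proof (cases "\<exists>n. form_bounded (x n)")
    case True
    then obtain N where bN: "form_bounded (x N)" by blast
    hence dN: "fdom (x N) = UNIV" using Vf_D(3)[OF xV] by blast
    have "n \<ge> N \<Longrightarrow> fdom (x n) = UNIV" for n using ch1[of N n] dN by auto
    then show ?thesis by (intro that[of "fdom (x N)" N]) (use dN bN True in auto)
  next
    case False
    have "fdom (x n) = fdom (x 0)" for n
      by (induction n) (use ld2 False in auto)
    hence e: "\<And>n. fdom (x n) = fdom (x 0)" .
    show ?thesis by (intro that[of "fdom (x 0)" 0]) (use False e in auto)
  qed
  have xD: "\<And>n u. n \<ge> N \<Longrightarrow> u \<in> D \<Longrightarrow> u \<in> fdom (x n)" using ND(2) by auto
  have qconv: "convergent (\<lambda>k. fval (x (k + N)) w w)" if w: "w \<in> D" for w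
  proof -
    define q where "q k = Re (fval (x (k + N)) w w)" for k
    have "decseq q" unfolding decseq_Suc_iff
    proof
      fix k have "w \<in> fdom (x (k+N))" using xD w by simp
      thus "q (Suc k) \<le> q k" using ld3[of w "k+N"] by (simp add: q_def)
    qed
    moreover have "\<forall>k. 0 \<le> q k" using pos_real(3)[OF xf(2)] xD w by (simp add: q_def)
    ultimately obtain l where "q \<longlonglongrightarrow> l" using decseq_convergent[of q 0] by blast
    hence "(\<lambda>k. complex_of_real (q k)) \<longlonglongrightarrow> of_real l" by (rule tendsto_of_real)
    moreover have "(\<lambda>k. complex_of_real (q k)) = (\<lambda>k. fval (x (k + N)) w w)"
      using pos_real'[OF xf(2)] xD w by (auto simp: q_def)
    ultimately show ?thesis unfolding convergent_def by auto
  qed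
  have cconv: "convergent (\<lambda>n. fval (x n) u v)" if uv: "u \<in> D" "v \<in> D" for u v
  proof -
    have mem: "u + c *\<^sub>C v \<in> D" for c using form_dom[OF xf(1)[of N]] uv ND(1) by auto
    have "convergent (\<lambda>k. fval (x (k + N)) u v)"
      by (rule polar_conv[where X="\<lambda>k. x (k + N)"]) (use xf xD uv qconv mem in auto)
    then obtain l where "(\<lambda>k. fval (x (k + N)) u v) \<longlonglongrightarrow> l" unfolding convergent_def by blast
    hence "(\<lambda>n. fval (x n) u v) \<longlonglongrightarrow> l" by (rule LIMSEQ_offset)
    thus ?thesis unfolding convergent_def by blast
  qed
  define L where "L u v = (if u \<in> D \<and> v \<in> D then lim (\<lambda>n. fval (x n) u v) else 0)" for u v
  have LL: "(\<lambda>n. fval (x n) u v) \<longlonglongrightarrow> L u v" if "u \<in> D" "v \<in> D" for u v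
    using cconv[OF that] that by (simp add: L_def convergent_LIMSEQ_iff)
  define Lf where "Lf = (D, L)"
  have fL: "fdom Lf = D" "fval Lf = L" by (auto simp: Lf_def fdom_def fval_def)
  have Dsub: "csubspace D" "closure D = UNIV" using xf(1)[of N] ND(1) unfolding is_form_def by auto
  have Dm: "\<And>a b. a \<in> D \<Longrightarrow> b \<in> D \<Longrightarrow> a + b \<in> D" "\<And>c a. a \<in> D \<Longrightarrow> c *\<^sub>C a \<in> D"
    using Dsub(1) unfolding csubspace_def by auto
  have isL: "is_form Lf"
  proof -
    have "L (u + u') v = L u v + L u' v" if uv: "u \<in> D" "u' \<in> D" "v \<in> D" for u u' v
    proof (rule eq_lim_eventually)
      show "(\<lambda>n. fval (x n) (u + u') v) \<longlonglongrightarrow> L (u + u') v" using uv Dm by (intro LL) auto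
      show "(\<lambda>n. fval (x n) u v + fval (x n) u' v) \<longlonglongrightarrow> L u v + L u' v" using uv by (intro tendsto_add LL)
      show "fval (x n) (u + u') v = fval (x n) u v + fval (x n) u' v" if n: "n \<ge> N" for n
        by (rule form_lin(1)[OF xf(1) xD[OF n uv(1)] xD[OF n uv(2)] xD[OF n uv(3)] xD[OF n uv(3)]])
    qed
    moreover have "L (c *\<^sub>C u) v = c * L u v" if uv: "u \<in> D" "v \<in> D" for c u v
    proof (rule eq_lim_eventually)
      show "(\<lambda>n. fval (x n) (c *\<^sub>C u) v) \<longlonglongrightarrow> L (c *\<^sub>C u) v" using uv Dm by (intro LL) auto
      show "(\<lambda>n. c * fval (x n) u v) \<longlonglongrightarrow> c * L u v" using uv by (intro tendsto_mult tendsto_const LL)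
      show "fval (x n) (c *\<^sub>C u) v = c * fval (x n) u v" if n: "n \<ge> N" for n
        by (rule form_lin(2)[OF xf(1) xD[OF n uv(1)] xD[OF n uv(1)] xD[OF n uv(2)] xD[OF n uv(2)]])
    qed
    moreover have "L u (v + v') = L u v + L u v'" if uv: "u \<in> D" "v \<in> D" "v' \<in> D" for u v v'
    proof (rule eq_lim_eventually)
      show "(\<lambda>n. fval (x n) u (v + v')) \<longlonglongrightarrow> L u (v + v')" using uv Dm by (intro LL) auto
      show "(\<lambda>n. fval (x n) u v + fval (x n) u v') \<longlonglongrightarrow> L u v + L u v'" using uv by (intro tendsto_add LL)
      show "fval (x n) u (v + v') = fval (x n) u v + fval (x n) u v'" if n: "n \<ge> N" for n
        by (rule form_lin(3)[OF xf(1) xD[OF n uv(1)] xD[OF n uv(1)] xD[OF n uv(2)] xD[OF n uv(3)]])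
    qed
    moreover have "L u (c *\<^sub>C v) = cnj c * L u v" if uv: "u \<in> D" "v \<in> D" for c u v
    proof (rule eq_lim_eventually)
      show "(\<lambda>n. fval (x n) u (c *\<^sub>C v)) \<longlonglongrightarrow> L u (c *\<^sub>C v)" using uv Dm by (intro LL) auto
      show "(\<lambda>n. cnj c * fval (x n) u v) \<longlonglongrightarrow> cnj c * L u v" using uv by (intro tendsto_mult tendsto_const LL)
      show "fval (x n) u (c *\<^sub>C v) = cnj c * fval (x n) u v" if n: "n \<ge> N" for n
        by (rule form_lin(4)[OF xf(1) xD[OF n uv(1)] xD[OF n uv(1)] xD[OF n uv(2)] xD[OF n uv(2)]])
    qed
    moreover have "L u v = 0" if "u \<notin> D \<or> v \<notin> D" for u v using that by (auto simp: L_def)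
    ultimately show ?thesis unfolding is_form_def fL using Dsub by blast
  qed
  have posL: "form_positive Lf"
    unfolding form_positive_def fL
  proof (intro ballI conjI)
    fix w assume w: "w \<in> D"
    have "(\<lambda>n. Im (fval (x n) w w)) \<longlonglongrightarrow> Im (L w w)" by (intro tendsto_Im LL w)
    moreover have "(\<lambda>n. Im (fval (x n) w w)) \<longlonglongrightarrow> 0"
      by (rule Lim_transform_eventually[OF tendsto_const])
        (unfold eventually_sequentially, rule exI[of _ N], use xD w xf(2) in \<open>auto simp: form_positive_def\<close>)
    ultimately show "Im (L w w) = 0" by (rule LIMSEQ_unique)
    have "(\<lambda>n. Re (fval (x n) w w)) \<longlonglongrightarrow> Re (L w w)" by (intro tendsto_Re LL w)
    thus "0 \<le> Re (L w w)"
      by (rule LIMSEQ_le_const) (use xD w pos_real(3)[OF xf(2)] in \<open>auto intro!: exI[of _ N]\<close>)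
  qed
  have Lle: "Re (L v v) \<le> Re (fval (x n) v v)" if v: "v \<in> fdom (x n)" for v n
  proof -
    have vD: "v \<in> D" using v ND(3) by auto
    have "(\<lambda>m. Re (fval (x m) v v)) \<longlonglongrightarrow> Re (L v v)" by (intro tendsto_Re LL vD)
    thus ?thesis by (rule LIMSEQ_le_const2) (use ch2 v in \<open>auto intro!: exI[of _ n]\<close>)
  qed
  have LB: "form_bounded Lf" if "\<exists>n. form_bounded (x n)"
  proof -
    have bN: "form_bounded (x N)" using ND(4) that by blast
    obtain M where M: "M \<ge> 0" "\<forall>w\<in>fdom (x N). Re (fval (x N) w w) \<le> M * (norm w)^2"
      using bounded_M[OF xf(1) xf(2) bN] by blast
    have "\<forall>w\<in>fdom Lf. Re (fval Lf w w) \<le> M * (norm w)^2"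
    proof
      fix w assume "w \<in> fdom Lf"
      hence w: "w \<in> fdom (x N)" using ND(1) fL by simp
      show "Re (fval Lf w w) \<le> M * (norm w)^2" using Lle[OF w] M(2) w fL by fastforce
    qed
    thus ?thesis by (rule M_bounded)
  qed
  obtain y where Y: "y \<in> Vf" "D \<subseteq> fdom y" "\<And>u v. u \<in> D \<Longrightarrow> v \<in> D \<Longrightarrow> fval y u v = L u v"
    "form_bounded y \<or> (fdom y = D \<and> (\<forall>n. fdom (x n) = D))" "form_bounded y \<Longrightarrow> form_bounded Lf"
  proof (cases "form_bounded Lf")
    case True
    obtain M where M: "M \<ge> 0" "\<forall>w\<in>fdom Lf. Re (fval Lf w w) \<le> M * (norm w)^2"
      using bounded_M[OF isL posL True] by blast
    obtain Y where Y: "fdom Y = UNIV" "is_form Y" "form_positive Y" "\<forall>w. Re (fval Y w w) \<le> M * (norm w)^2"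
      "\<forall>u\<in>fdom Lf. \<forall>v\<in>fdom Lf. fval Y u v = fval Lf u v"
      using form_ext[OF isL posL M] by blast
    have bY: "form_bounded Y" using Y(4) by (intro M_bounded) auto
    have "Y \<in> Vf" using Y bY unfolding Vf_def by auto
    then show ?thesis using that[of Y] Y bY True fL by auto
  next
    case False
    have all: "\<forall>n. fdom (x n) = D" using ND(5) LB False by blast
    have "Lf \<in> Vf" using isL posL False unfolding Vf_def by auto
    then show ?thesis using that[of Lf] fL False all by auto
  qed
  show "\<exists>y\<in>Vf. (\<forall>n. Vf_le y (x n)) \<and> (\<forall>z\<in>Vf. (\<forall>n. Vf_le z (x n)) \<longrightarrow> Vf_le z y)"
  proof (intro bexI[of _ y] conjI allI ballI impI)
    show "y \<in> Vf" by (rule Y(1))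
    fix n show "Vf_le y (x n)"
    proof (rule le_I[OF Y(1) xV])
      show "fdom (x n) \<subseteq> fdom y" using ND(3) Y(2) by blast
      show "fdom (x n) = fdom y \<or> form_bounded y" using Y(4) by auto
      show "\<forall>v\<in>fdom (x n). Re (fval y v v) \<le> Re (fval (x n) v v)"
      proof
        fix v assume v: "v \<in> fdom (x n)"
        hence "v \<in> D" using ND(3) by blast
        thus "Re (fval y v v) \<le> Re (fval (x n) v v)" using Y(3) Lle[OF v] by simp
      qed
    qed
  next
    fix z assume zV: "z \<in> Vf" and zle: "\<forall>n. Vf_le z (x n)"
    have zD1: "D \<subseteq> fdom z" "D = fdom z \<or> form_bounded z"
      using le_D[OF zV xV zle[rule_format, of N]] ND(1) by auto
    have zL: "Re (fval z v v) \<le> Re (L v v)" if v: "v \<in> D" for v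
    proof -
      have "(\<lambda>m. Re (fval (x m) v v)) \<longlonglongrightarrow> Re (L v v)" by (intro tendsto_Re LL v)
      thus ?thesis
      proof (rule LIMSEQ_le_const)
        show "\<exists>N'. \<forall>m\<ge>N'. Re (fval z v v) \<le> Re (fval (x m) v v)"
        proof (intro exI[of _ N] allI impI)
          fix m assume m: "m \<ge> N"
          have "v \<in> fdom (x m)" using xD[OF m v] .
          thus "Re (fval z v v) \<le> Re (fval (x m) v v)" using le_D(3)[OF zV xV zle[rule_format, of m]] by blast
        qed
      qed
    qed
    show "Vf_le z y"
    proof (cases "form_bounded y")
      case True
      hence bL: "form_bounded Lf" using Y(5) by blast
      obtain M where M: "M \<ge> 0" "\<forall>w\<in>D. Re (L w w) \<le> M * (norm w)^2"
        using bounded_M[OF isL posL bL] fL by auto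
      have bz: "form_bounded z"
      proof (cases "D = fdom z")
        case True
        have "\<forall>w\<in>fdom z. Re (fval z w w) \<le> M * (norm w)^2"
        proof
          fix w assume "w \<in> fdom z" hence w: "w \<in> D" using True by simp
          show "Re (fval z w w) \<le> M * (norm w)^2" using zL[OF w] M(2) w by fastforce
        qed
        thus ?thesis by (rule M_bounded)
      next
        case False thus ?thesis using zD1 by auto
      qed
      have zU: "fdom z = UNIV" using Vf_D(3)[OF zV bz] .
      have yU: "fdom y = UNIV" using Vf_D(3)[OF Y(1) True] .
      show ?thesis
      proof (rule le_I[OF zV Y(1)])
        show "fdom y \<subseteq> fdom z" using zU by simp
        show "fdom y = fdom z \<or> form_bounded z" using bz by simp
        show "\<forall>v\<in>fdom y. Re (fval z v v) \<le> Re (fval y v v)"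
        proof
          fix v
          obtain a where a: "\<And>n. a n \<in> D" "a \<longlonglongrightarrow> v"
            using closure_sequential[of v D] Dsub(2) by auto
          obtain Mz where Mz: "Mz \<ge> 0" "\<forall>w\<in>fdom z. Re (fval z w w) \<le> Mz * (norm w)^2"
            using bounded_M[OF Vf_D(1)[OF zV] Vf_D(2)[OF zV] bz] by blast
          obtain My where My: "My \<ge> 0" "\<forall>w\<in>fdom y. Re (fval y w w) \<le> My * (norm w)^2"
            using bounded_M[OF Vf_D(1)[OF Y(1)] Vf_D(2)[OF Y(1)] True] by blast
          have "(\<lambda>n. fval z (a n) (a n)) \<longlonglongrightarrow> fval z v v"
            by (rule form_cont[OF Vf_D(1)[OF zV] Vf_D(2)[OF zV] Mz]) (use zU a in auto)
          hence cz: "(\<lambda>n. Re (fval z (a n) (a n))) \<longlonglongrightarrow> Re (fval z v v)" by (rule tendsto_Re)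
          have "(\<lambda>n. fval y (a n) (a n)) \<longlonglongrightarrow> fval y v v"
            by (rule form_cont[OF Vf_D(1)[OF Y(1)] Vf_D(2)[OF Y(1)] My]) (use yU a in auto)
          hence cy: "(\<lambda>n. Re (fval y (a n) (a n))) \<longlonglongrightarrow> Re (fval y v v)" by (rule tendsto_Re)
          show "Re (fval z v v) \<le> Re (fval y v v)"
            by (rule LIMSEQ_le[OF cz cy]) (use zL Y(3) a in auto)
        qed
      qed
    next
      case False
      hence yD: "fdom y = D" "\<forall>n. fdom (x n) = D" using Y(4) by auto
      show ?thesis
      proof (rule le_I[OF zV Y(1)])
        show "fdom y \<subseteq> fdom z" using yD zD1 by auto
        show "fdom y = fdom z \<or> form_bounded z" using yD zD1 by auto
        show "\<forall>v\<in>fdom y. Re (fval z v v) \<le> Re (fval y v v)" using yD zL Y(3) by auto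
      qed
    qed
  qed
qed

end
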